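(* Let $\hat{\mathcal{Z}}_k=\langle \hat c_k,\hat G_k\rangle\subset\mathbb{R}^n$ be a zonotope with $\mathcal{R}_{\phi,k}\subseteq\hat{\mathcal{Z}}_k$. For $i=1,\dots,n_{\phi,k}$ let the side information at step $k$ be encoded by a set $\mathcal{S}_{i,k}\subseteq\mathbb{R}^n$ such that every $x\in\mathcal{R}_{\phi,k}$ lies in $\mathcal{S}_{i,k}$, where each $\mathcal{S}_{i,k}$ is of one of two types: (linear) $\mathcal{S}_{i,k}=\{x:|H_{i,k}x-y_{i,k}|\le r_{i,k}\}$ with $H_{i,k}\in\mathbb{R}^{p\times n}$, $y_{i,k}\in\mathbb{R}^p$, $r_{i,k}\in\mathbb{R}^p_{\ge 0}$; (nonlinear) $\mathcal{S}_{i,k}=\{x:|h_{i,k}(x)|\le r_{i,k}\}$ with $h_{i,k}:\mathbb{R}^n\to\mathbb{R}^p$ differentiable and $r_{i,k}\in\mathbb{R}^p_{\ge0}$ (absolute values and inequalities componentwise). Run the following procedure. Initialize $\bar c_k=\hat c_k$, $\bar G_k=\hat G_k$. For $i=1,\dots,n_{\phi,k}$ in order, with an arbitrary matrix $\lambda_{i,k}\in\mathbb{R}^{n\times p}$: - in the linear case, set $\bar c_k\leftarrow \bar c_k+\lambda_{i,k}(y_{i,k}-H_{i,k}\bar c_k)$ and $\bar G_k\leftarrow\big[(I-\lambda_{i,k}H_{i,k})\bar G_k,\ \lambda_{i,k}\operatorname{diag}(r_{i,k})\big]$; - in the nonlinear case, pick a point $x^*_{i,k}\in\mathbb{R}^n$,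 let $J_{i,k}=\frac{\partial h_{i,k}}{\partial x}\big|_{x^*_{i,k}}$, and pick a zonotope $\langle c_{L,i,k},G_{L,i,k}\rangle\subset\mathbb{R}^p$ such that $h_{i,k}(x)-h_{i,k}(x^*_{i,k})-J_{i,k}(x-x^*_{i,k})\in\langle c_{L,i,k},G_{L,i,k}\rangle$ for every $x$ in the current zonotope $\langle\bar c_k,\bar G_k\rangle$; then set $\bar c_k\leftarrow\bar c_k-\lambda_{i,k}\big(h_{i,k}(x^*_{i,k})+J_{i,k}(\bar c_k-x^*_{i,k})+c_{L,i,k}\big)$ and $\bar G_k\leftarrow\big[(I-\lambda_{i,k}J_{i,k})\bar G_k,\ \lambda_{i,k}\operatorname{diag}(r_{i,k}),\ -\lambda_{i,k}G_{L,i,k}\big]$ (all updates using the values of $\bar c_k,\bar G_k$ before the update). Then the resulting zonotope $\bar{\mathcal{Z}}_k=\langle\bar c_k,\bar G_k\rangle$ satisfies $\bar{\mathcal{Z}}_k\supseteq\mathcal{R}_{\phi,k}$.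
   Context: A zonotope with center $c\in\mathbb{R}^n$ and generator matrix $G\in\mathbb{R}^{n\times\gamma}$ is $\langle c,G\rangle=\{c+G\beta:\beta\in[-1,1]^\gamma\}$. Consider the discrete-time system $x(k+1)=f(x(k),u(k))+w(k)$ with $f$ an unknown twice differentiable function, process noise $w(k)\in\mathcal{Z}_w$ ($\mathcal{Z}_w$ a zonotope), inputs $u(k)\in\mathcal{U}_k$ (zonotopes), initial set $\mathcal{X}_0$ (a zonotope), and signal temporal logic side-information formulas $\phi_k=\phi_{1,k}\wedge\dots\wedge\phi_{n_{\phi,k},k}$ for each step $k$. The STL-constrained reachable set is $\mathcal{R}_{\phi,N}=\{x(N)\in\mathbb{R}^n:\ x(0)\in\mathcal{X}_0,\ x(0)\models\phi_0,\ \text{and for all }k\in\{0,\dots,N-1\}:\ x(k+1)=f(x(k),u(k))+w(k),\ w(k)\in\mathcal{Z}_w,\ u(k)\in\mathcal{U}_k,\ x(k+1)\models\phi_{k+1}\}$. For $r\in\mathbb{R}^p$, $\operatorname{diag}(r)$ denotes the diagonal matrix with diagonal $r$. *)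

theory Defs
  imports "HOL-Analysis.Analysis"
begin

text \<open>Zonotope with center c and generator matrix given as the list of its columns:
  zono c G = { c + G beta : beta in [-1,1]^gamma }.\<close>
definition zono :: "'a::real_vector \<Rightarrow> 'a list \<Rightarrow> 'a set" where
  "zono c G = {c + (\<Sum>l<length G. \<beta> l *\<^sub>R G ! l) | \<beta>. \<forall>l<length G. \<bar>\<beta> l\<bar> \<le> 1}"

text \<open>Vectors in R^p are functions nat => real (only indices j < p matter);
  a p x n matrix is given by its rows (nat => real^n); an n x p matrix lambda
  by its columns (nat => real^n).  lamv lam p v = lambda * v.\<close>
definition lamv :: "(nat \<Rightarrow> real^'n) \<Rightarrow> nat \<Rightarrow> (nat \<Rightarrow> real) \<Rightarrow> real^'n" where
  "lamv lam p v = (\<Sum>j<p. v j *\<^sub>R lam j)"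

text \<open>Side information: linear (p, H, y, r) or nonlinear (p, h, r).\<close>
datatype 'n sideinfo =
    Lin nat "nat \<Rightarrow> real^'n" "nat \<Rightarrow> real" "nat \<Rightarrow> real"
  | Nonlin nat "real^'n \<Rightarrow> nat \<Rightarrow> real" "nat \<Rightarrow> real"

fun sinfo_set :: "'n::finite sideinfo \<Rightarrow> (real^'n) set" where
  "sinfo_set (Lin p H y r) = {x. \<forall>j<p. \<bar>H j \<bullet> x - y j\<bar> \<le> r j}"
| "sinfo_set (Nonlin p h r) = {x. \<forall>j<p. \<bar>h x j\<bar> \<le> r j}"

fun sinfo_wf :: "'n::finite sideinfo \<Rightarrow> bool" where
  "sinfo_wf (Lin p H y r) = (\<forall>j<p. 0 \<le> r j)"
| "sinfo_wf (Nonlin p h r) = ((\<forall>j<p. 0 \<le> r j) \<and>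
      (\<forall>j<p. \<forall>x. (\<lambda>z. h z j) differentiable (at x)))"

text \<open>One update step of the procedure, with all admissible choices existentially
  quantified (lambda arbitrary; x*, J = Jacobian at x*, and a bounding zonotope
  for the linearisation error over the current zonotope).\<close>
fun upd_step :: "'n::finite sideinfo \<Rightarrow> ((real^'n) \<times> (real^'n) list)
                   \<Rightarrow> ((real^'n) \<times> (real^'n) list) \<Rightarrow> bool" where
  "upd_step (Lin p H y r) (c, G) (c', G') =
     (\<exists>lam. c' = c + lamv lam p (\<lambda>j. y j - H j \<bullet> c) \<and>
            G' = map (\<lambda>g. g - lamv lam p (\<lambda>j. H j \<bullet> g)) G
                 @ map (\<lambda>j. r j *\<^sub>R lam j) [0..<p])"
| "upd_step (Nonlin p h r) (c, G) (c', G') =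
     (\<exists>lam xs J cL GL.
        (\<forall>j<p. ((\<lambda>z. h z j) has_derivative (\<lambda>v. J j \<bullet> v)) (at xs)) \<and>
        (\<forall>x\<in>zono c G. \<exists>\<beta>. (\<forall>l<length GL. \<bar>\<beta> l\<bar> \<le> 1) \<and>
            (\<forall>j<p. h x j - h xs j - J j \<bullet> (x - xs) = cL j + (\<Sum>l<length GL. \<beta> l * (GL ! l) j))) \<and>
        c' = c - lamv lam p (\<lambda>j. h xs j + J j \<bullet> (c - xs) + cL j) \<and>
        G' = map (\<lambda>g. g - lamv lam p (\<lambda>j. J j \<bullet> g)) G
             @ map (\<lambda>j. r j *\<^sub>R lam j) [0..<p]
             @ map (\<lambda>gl. - lamv lam p gl) GL)"

end

theory Submission
  imports Defs
begin

lemma lamv_add: "lamv lam p (\<lambda>j. a j + b j) = lamv lam p a + lamv lam p b"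
  by (simp add: lamv_def scaleR_add_left sum.distrib)
lemma lamv_diff: "lamv lam p (\<lambda>j. a j - b j) = lamv lam p a - lamv lam p b"
  by (simp add: lamv_def scaleR_diff_left sum_subtractf)
lemma lamv_scale: "lamv lam p (\<lambda>j. t * a j) = t *\<^sub>R lamv lam p a"
  by (simp add: lamv_def scaleR_sum_right)
lemma lamv_sum: "lamv lam p (\<lambda>j. \<Sum>l\<in>A. f l j) = (\<Sum>l\<in>A. lamv lam p (f l))"
  by (simp add: lamv_def scaleR_sum_left sum.swap[of _ A])
lemma lamv_cong: "(\<And>j. j < p \<Longrightarrow> a j = b j) \<Longrightarrow> lamv lam p a = lamv lam p b"
  by (simp add: lamv_def)

lemma sum_append_list:
  fixes A B :: "'a::real_vector list"
  shows "(\<Sum>l<length (A@B). \<beta> l *\<^sub>R (A@B)!l) =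
     (\<Sum>l<length A. \<beta> l *\<^sub>R A!l) + (\<Sum>l<length B. \<beta> (l + length A) *\<^sub>R B!l)"
proof (induction B rule: rev_induct)
  case Nil then show ?case by simp
next
  case (snoc b B)
  have "(\<Sum>l<length (A@B@[b]). \<beta> l *\<^sub>R (A@B@[b])!l) =
     (\<Sum>l<length (A@B). \<beta> l *\<^sub>R (A@B@[b])!l) + \<beta> (length A + length B) *\<^sub>R b"
    by (simp add: nth_append)
  also have "(\<Sum>l<length (A@B). \<beta> l *\<^sub>R (A@B@[b])!l) = (\<Sum>l<length (A@B). \<beta> l *\<^sub>R (A@B)!l)"
    by (rule sum.cong) (auto simp: nth_append)
  also have "(\<Sum>l<length (B@[b]). \<beta> (l + length A) *\<^sub>R (B@[b])!l) =
     (\<Sum>l<length B. \<beta> (l + length A) *\<^sub>R B!l) + \<beta> (length A + length B) *\<^sub>R b"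
  proof -
    have "(\<Sum>l<length (B@[b]). \<beta> (l + length A) *\<^sub>R (B@[b])!l) =
       (\<Sum>l<length B. \<beta> (l + length A) *\<^sub>R (B@[b])!l) + \<beta> (length A + length B) *\<^sub>R b"
      by (simp add: add.commute)
    also have "(\<Sum>l<length B. \<beta> (l + length A) *\<^sub>R (B@[b])!l) = (\<Sum>l<length B. \<beta> (l + length A) *\<^sub>R B!l)"
      by (rule sum.cong) (auto simp: nth_append)
    finally show ?thesis .
  qed
  ultimately show ?case using snoc by (simp add: algebra_simps)
qed

lemma zono_appendI:
  fixes A B :: "'a::real_vector list"
  assumes "\<forall>l<length A. \<bar>a l\<bar> \<le> 1" "\<forall>l<length B. \<bar>b l\<bar> \<le> 1"
    and "x = c + (\<Sum>l<length A. a l *\<^sub>R A!l) + (\<Sum>l<length B. b l *\<^sub>R B!l)"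
  shows "x \<in> zono c (A@B)"
proof -
  define \<beta> where "\<beta> l = (if l < length A then a l else b (l - length A))" for l
  have b1: "\<forall>l<length (A@B). \<bar>\<beta> l\<bar> \<le> 1" using assms(1,2) by (auto simp: \<beta>_def)
  have "(\<Sum>l<length (A@B). \<beta> l *\<^sub>R (A@B)!l) =
     (\<Sum>l<length A. a l *\<^sub>R A!l) + (\<Sum>l<length B. b l *\<^sub>R B!l)"
    unfolding sum_append_list by (auto simp: \<beta>_def intro!: sum.cong arg_cong2[where f="(+)"])
  then have "x = c + (\<Sum>l<length (A@B). \<beta> l *\<^sub>R (A@B)!l)" using assms(3) by (simp add: add.assoc)
  then show ?thesis unfolding zono_def using b1 by blast
qed

lemma sum_map_list:
  "(\<Sum>l<length (map f G). \<beta> l *\<^sub>R (map f G)!l) = (\<Sum>l<length G. \<beta> l *\<^sub>R f (G!l))"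
  by simp

lemma sum_map_upt:
  "(\<Sum>l<length (map f [0..<p]). \<beta> l *\<^sub>R (map f [0..<p])!l) = (\<Sum>l<p. \<beta> l *\<^sub>R f l)"
  by (auto intro!: sum.cong)

lemma step_ok:
  fixes S :: "'n::finite sideinfo"
  assumes x: "x \<in> zono c G" and xs: "x \<in> sinfo_set S" and wf: "sinfo_wf S"
    and st: "upd_step S (c, G) (c', G')"
  shows "x \<in> zono c' G'"
proof (cases S)
  case (Lin p H y r)
  from x obtain \<beta> where b: "\<forall>l<length G. \<bar>\<beta> l\<bar> \<le> 1"
      and xe: "x = c + (\<Sum>l<length G. \<beta> l *\<^sub>R G ! l)" unfolding zono_def by auto
  from st Lin obtain lam where c': "c' = c + lamv lam p (\<lambda>j. y j - H j \<bullet> c)"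
     and G': "G' = map (\<lambda>g. g - lamv lam p (\<lambda>j. H j \<bullet> g)) G @ map (\<lambda>j. r j *\<^sub>R lam j) [0..<p]"
    by auto
  define \<gamma> where "\<gamma> j = (if r j = 0 then 0 else (H j \<bullet> x - y j) / r j)" for j
  have d: "\<forall>j<p. \<bar>H j \<bullet> x - y j\<bar> \<le> r j" using xs Lin by auto
  have r0: "\<forall>j<p. 0 \<le> r j" using wf Lin by auto
  have gb: "\<forall>l<p. \<bar>\<gamma> l\<bar> \<le> 1"
  proof (intro allI impI)
    fix l assume "l < p"
    with d r0 have "\<bar>H l \<bullet> x - y l\<bar> \<le> r l" "0 \<le> r l" by auto
    then show "\<bar>\<gamma> l\<bar> \<le> 1"
    proof (cases "r l = 0")
      case False
      with \<open>0 \<le> r l\<close> have rp: "0 < r l" by simp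
      have "\<bar>\<gamma> l\<bar> = \<bar>H l \<bullet> x - y l\<bar> / r l" using False rp by (simp add: \<gamma>_def abs_divide)
      also have "\<dots> \<le> 1" using \<open>\<bar>H l \<bullet> x - y l\<bar> \<le> r l\<close> rp by (simp add: divide_le_eq_1_pos)
      finally show ?thesis .
    qed (simp add: \<gamma>_def)
  qed
  have gsum: "(\<Sum>l<p. \<gamma> l *\<^sub>R (r l *\<^sub>R lam l)) = lamv lam p (\<lambda>j. H j \<bullet> x - y j)"
    unfolding lamv_def
  proof (rule sum.cong)
    fix l assume "l \<in> {..<p}"
    with d have "\<bar>H l \<bullet> x - y l\<bar> \<le> r l" by auto
    then show "\<gamma> l *\<^sub>R (r l *\<^sub>R lam l) = (H l \<bullet> x - y l) *\<^sub>R lam l"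
      by (auto simp: \<gamma>_def)
  qed simp
  have xc: "x - c = (\<Sum>l<length G. \<beta> l *\<^sub>R G ! l)" using xe by simp
  have hx: "H j \<bullet> (x - c) = (\<Sum>l<length G. \<beta> l * (H j \<bullet> G ! l))" for j
    unfolding xc by (simp add: inner_sum_right)
  have s1: "(\<Sum>l<length G. \<beta> l *\<^sub>R (G!l - lamv lam p (\<lambda>j. H j \<bullet> G!l))) =
      (x - c) - lamv lam p (\<lambda>j. H j \<bullet> (x - c))"
  proof -
    have "lamv lam p (\<lambda>j. H j \<bullet> (x - c)) = (\<Sum>l<length G. \<beta> l *\<^sub>R lamv lam p (\<lambda>j. H j \<bullet> G!l))"
      by (simp only: hx lamv_sum lamv_scale)
    then show ?thesis by (simp add: xc scaleR_diff_right sum_subtractf)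
  qed
  have "x = c' + (\<Sum>l<length G. \<beta> l *\<^sub>R (G!l - lamv lam p (\<lambda>j. H j \<bullet> G!l)))
          + (\<Sum>l<p. \<gamma> l *\<^sub>R (r l *\<^sub>R lam l))"
  proof -
    have e: "lamv lam p (\<lambda>j. y j - H j \<bullet> c) - lamv lam p (\<lambda>j. H j \<bullet> (x - c))
        + lamv lam p (\<lambda>j. H j \<bullet> x - y j) = lamv lam p (\<lambda>j. (y j - H j \<bullet> c) - H j \<bullet> (x - c) + (H j \<bullet> x - y j))"
      by (simp add: lamv_add lamv_diff)
    also have "\<dots> = lamv lam p (\<lambda>j. 0)" by (rule lamv_cong) (simp add: inner_diff_right)
    also have "\<dots> = 0" by (simp add: lamv_def)
    finally show ?thesis unfolding s1 gsum c' by (simp add: algebra_simps)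
  qed
  then show ?thesis unfolding G' using b gb
    by (intro zono_appendI[where a=\<beta> and b=\<gamma>]) (simp_all add: sum_map_upt)
next
  case (Nonlin p h r)
  from x obtain \<beta> where b: "\<forall>l<length G. \<bar>\<beta> l\<bar> \<le> 1"
      and xe: "x = c + (\<Sum>l<length G. \<beta> l *\<^sub>R G ! l)" unfolding zono_def by auto
  from st Nonlin obtain lam xst J cL GL where
     L: "\<forall>x\<in>zono c G. \<exists>\<beta>. (\<forall>l<length GL. \<bar>\<beta> l\<bar> \<le> 1) \<and>
            (\<forall>j<p. h x j - h xst j - J j \<bullet> (x - xst) = cL j + (\<Sum>l<length GL. \<beta> l * (GL ! l) j))"
     and c': "c' = c - lamv lam p (\<lambda>j. h xst j + J j \<bullet> (c - xst) + cL j)"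
     and G': "G' = map (\<lambda>g. g - lamv lam p (\<lambda>j. J j \<bullet> g)) G
             @ map (\<lambda>j. r j *\<^sub>R lam j) [0..<p]
             @ map (\<lambda>gl. - lamv lam p gl) GL"
    by auto
  from L x obtain \<delta> where db: "\<forall>l<length GL. \<bar>\<delta> l\<bar> \<le> 1"
    and de: "\<forall>j<p. h x j - h xst j - J j \<bullet> (x - xst) = cL j + (\<Sum>l<length GL. \<delta> l * (GL ! l) j)"
    by blast
  define \<gamma> where "\<gamma> j = (if r j = 0 then 0 else h x j / r j)" for j
  have d: "\<forall>j<p. \<bar>h x j\<bar> \<le> r j" using xs Nonlin by auto
  have r0: "\<forall>j<p. 0 \<le> r j" using wf Nonlin by auto
  have gb: "\<forall>l<p. \<bar>\<gamma> l\<bar> \<le> 1"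
  proof (intro allI impI)
    fix l assume "l < p"
    with d r0 have "\<bar>h x l\<bar> \<le> r l" "0 \<le> r l" by auto
    then show "\<bar>\<gamma> l\<bar> \<le> 1"
    proof (cases "r l = 0")
      case False
      with \<open>0 \<le> r l\<close> have rp: "0 < r l" by simp
      have "\<bar>\<gamma> l\<bar> = \<bar>h x l\<bar> / r l" using False rp by (simp add: \<gamma>_def abs_divide)
      also have "\<dots> \<le> 1" using \<open>\<bar>h x l\<bar> \<le> r l\<close> rp by (simp add: divide_le_eq_1_pos)
      finally show ?thesis .
    qed (simp add: \<gamma>_def)
  qed
  have gsum: "(\<Sum>l<p. \<gamma> l *\<^sub>R (r l *\<^sub>R lam l)) = lamv lam p (\<lambda>j. h x j)"
    unfolding lamv_def
  proof (rule sum.cong)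
    fix l assume "l \<in> {..<p}"
    with d have "\<bar>h x l\<bar> \<le> r l" by auto
    then show "\<gamma> l *\<^sub>R (r l *\<^sub>R lam l) = h x l *\<^sub>R lam l"
      by (auto simp: \<gamma>_def)
  qed simp
  have xc: "x - c = (\<Sum>l<length G. \<beta> l *\<^sub>R G ! l)" using xe by simp
  have hx: "J j \<bullet> (x - c) = (\<Sum>l<length G. \<beta> l * (J j \<bullet> G ! l))" for j
    unfolding xc by (simp add: inner_sum_right)
  have s1: "(\<Sum>l<length G. \<beta> l *\<^sub>R (G!l - lamv lam p (\<lambda>j. J j \<bullet> G!l))) =
      (x - c) - lamv lam p (\<lambda>j. J j \<bullet> (x - c))"
  proof -
    have "lamv lam p (\<lambda>j. J j \<bullet> (x - c)) = (\<Sum>l<length G. \<beta> l *\<^sub>R lamv lam p (\<lambda>j. J j \<bullet> G!l))"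
      by (simp only: hx lamv_sum lamv_scale)
    then show ?thesis by (simp add: xc scaleR_diff_right sum_subtractf)
  qed
  have s3: "(\<Sum>l<length GL. \<delta> l *\<^sub>R (- lamv lam p (GL!l))) =
      - lamv lam p (\<lambda>j. \<Sum>l<length GL. \<delta> l * (GL ! l) j)"
    unfolding lamv_sum lamv_scale by (simp add: sum_negf)
  have "x = c' + (\<Sum>l<length G. \<beta> l *\<^sub>R (G!l - lamv lam p (\<lambda>j. J j \<bullet> G!l)))
          + ((\<Sum>l<p. \<gamma> l *\<^sub>R (r l *\<^sub>R lam l)) + (\<Sum>l<length GL. \<delta> l *\<^sub>R (- lamv lam p (GL!l))))"
  proof -
    have "- lamv lam p (\<lambda>j. h xst j + J j \<bullet> (c - xst) + cL j) - lamv lam p (\<lambda>j. J j \<bullet> (x - c))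
        + lamv lam p (\<lambda>j. h x j) - lamv lam p (\<lambda>j. \<Sum>l<length GL. \<delta> l * (GL ! l) j)
       = lamv lam p (\<lambda>j. h x j - (h xst j + J j \<bullet> (c - xst) + cL j) - J j \<bullet> (x - c)
            - (\<Sum>l<length GL. \<delta> l * (GL ! l) j))"
      by (simp add: lamv_add lamv_diff)
    also have "\<dots> = lamv lam p (\<lambda>j. 0)"
    proof (rule lamv_cong)
      fix j assume "j < p"
      with de have "h x j - h xst j - J j \<bullet> (x - xst) = cL j + (\<Sum>l<length GL. \<delta> l * (GL ! l) j)" by auto
      then show "h x j - (h xst j + J j \<bullet> (c - xst) + cL j) - J j \<bullet> (x - c)
            - (\<Sum>l<length GL. \<delta> l * (GL ! l) j) = 0"
        by (simp add: inner_diff_right)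
    qed
    also have "\<dots> = 0" by (simp add: lamv_def)
    finally show ?thesis unfolding s1 gsum s3 c' by (simp add: algebra_simps)
  qed
  moreover have "(\<Sum>l<p. \<gamma> l *\<^sub>R (r l *\<^sub>R lam l)) + (\<Sum>l<length GL. \<delta> l *\<^sub>R (- lamv lam p (GL!l)))
     = (\<Sum>l<length (map (\<lambda>j. r j *\<^sub>R lam j) [0..<p] @ map (\<lambda>gl. - lamv lam p gl) GL).
          (\<lambda>l. if l < p then \<gamma> l else \<delta> (l - p)) l *\<^sub>R
           (map (\<lambda>j. r j *\<^sub>R lam j) [0..<p] @ map (\<lambda>gl. - lamv lam p gl) GL) ! l)"
    unfolding sum_append_list by (auto intro!: sum.cong arg_cong2[where f="(+)"])
  ultimately show ?thesis unfolding G' using b gb db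
    by (intro zono_appendI[where a=\<beta> and b="\<lambda>l. if l < p then \<gamma> l else \<delta> (l - p)"]) auto
qed

theorem theorem1:
  fixes R :: "(real^'n::finite) set"
    and c0 :: "real^'n" and G0 :: "(real^'n) list"
    and infos :: "'n sideinfo list"
    and Zs :: "((real^'n) \<times> (real^'n) list) list"
  assumes "R \<subseteq> zono c0 G0"
    and "\<forall>S\<in>set infos. sinfo_wf S"
    and "\<forall>S\<in>set infos. R \<subseteq> sinfo_set S"
    and "length Zs = Suc (length infos)"
    and "Zs ! 0 = (c0, G0)"
    and "\<forall>i<length infos. upd_step (infos ! i) (Zs ! i) (Zs ! Suc i)"
  shows "R \<subseteq> zono (fst (last Zs)) (snd (last Zs))"
proof
  fix x assume xR: "x \<in> R"
  have "\<forall>i\<le>length infos. x \<in> zono (fst (Zs ! i)) (snd (Zs ! i))"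
  proof (intro allI impI)
    fix i assume "i \<le> length infos"
    then show "x \<in> zono (fst (Zs ! i)) (snd (Zs ! i))"
    proof (induction i)
      case 0 then show ?case using assms(1,5) xR by auto
    next
      case (Suc i)
      then have IH: "x \<in> zono (fst (Zs ! i)) (snd (Zs ! i))" and il: "i < length infos" by auto
      have "infos ! i \<in> set infos" using il by simp
      then have "sinfo_wf (infos ! i)" "x \<in> sinfo_set (infos ! i)" using assms(2,3) xR by auto
      moreover have "upd_step (infos ! i) (fst (Zs ! i), snd (Zs ! i)) (fst (Zs ! Suc i), snd (Zs ! Suc i))"
        using assms(6) il by simp
      ultimately show ?case using step_ok IH by blast
    qed
  qed
  moreover have "last Zs = Zs ! length infos"
    using assms(4) by (metis diff_Suc_1 last_conv_nth list.size(3) nat.simps(3))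
  ultimately show "x \<in> zono (fst (last Zs)) (snd (last Zs))" by auto
qed

end
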